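(* Let $I\subseteq\mathbb{R}_+$ be an open interval, let $p\in\mathbb{R}$ and $q<0$, and let $f:I\to\mathbb{R}_+$ be $(p,q)$-Jensen convex, i.e. \[ f\big(H_p(x,y)\big)\le H_q\big(f(x),f(y)\big)\qquad(x,y\in I). \] Then $f_{p,q}$ is convex on $I_p$, and consequently $f$ is continuous and moreover locally Lipschitz on $I$.
   Context: $\mathbb{R}_+=]0,\infty[$. For $p\in\mathbb{R}$ the power mean is $H_p(x,y)=\left(\frac{x^p+y^p}{2}\right)^{1/p}$ if $p\neq0$ and $H_0(x,y)=\sqrt{xy}$, for $x,y>0$. For $f:I\to\mathbb{R}_+$ and $(p,q)\in\mathbb{R}^2$, set $I_p=\{t^p\mid t\in I\}$ if $p\neq0$ and $I_p=\{\log t\mid t\in I\}$ if $p=0$, and define $f_{p,q}:I_p\to\mathbb{R}$ by $f_{p,q}(x)=\operatorname{sign}(q)\big(f(x^{1/p})\big)^q$ if $p\neq0,q\neq0$; $f_{p,q}(x)=\operatorname{sign}(q)\big(f(\exp x)\big)^q$ if $p=0,q\neq0$; $f_{p,q}(x)=\log f(x^{1/p})$ if $p\neq0,q=0$; $f_{p,q}(x)=\log f(\exp x)$ if $p=q=0$. *)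

theory Defs
  imports "HOL-Analysis.Analysis"
begin

definition power_mean :: "real \<Rightarrow> real \<Rightarrow> real \<Rightarrow> real" where
  "power_mean p x y = (if p = 0 then sqrt (x * y) else ((x powr p + y powr p) / 2) powr (1 / p))"

definition interval_p :: "real \<Rightarrow> real set \<Rightarrow> real set" where
  "interval_p p I = (if p = 0 then ln ` I else (\<lambda>t. t powr p) ` I)"

definition f_pq :: "real \<Rightarrow> real \<Rightarrow> (real \<Rightarrow> real) \<Rightarrow> real \<Rightarrow> real" where
  "f_pq p q f x =
     (if p \<noteq> 0 \<and> q \<noteq> 0 then sgn q * (f (x powr (1 / p))) powr q
      else if p = 0 \<and> q \<noteq> 0 then sgn q * (f (exp x)) powr q
      else if p \<noteq> 0 \<and> q = 0 then ln (f (x powr (1 / p)))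
      else ln (f (exp x)))"

definition pq_jensen_convex :: "real \<Rightarrow> real \<Rightarrow> real set \<Rightarrow> (real \<Rightarrow> real) \<Rightarrow> bool" where
  "pq_jensen_convex p q I f \<longleftrightarrow>
     (\<forall>x\<in>I. \<forall>y\<in>I. f (power_mean p x y) \<le> power_mean q (f x) (f y))"

definition locally_lipschitz_on :: "real set \<Rightarrow> (real \<Rightarrow> real) \<Rightarrow> bool" where
  "locally_lipschitz_on I f \<longleftrightarrow>
     (\<forall>x\<in>I. \<exists>e>0. \<exists>L. L-lipschitz_on (cball x e \<inter> I) f)"

end

theory Submission
  imports Defs
begin


lemma bd_aux:
  fixes h :: "real \<Rightarrow> real"
  assumes mid: "\<And>s t. s \<in> {0..1} \<Longrightarrow> t \<in> {0..1} \<Longrightarrow> h ((s+t)/2) \<le> (h s + h t)/2"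
    and h0: "h 0 = 0" and h1: "h 1 = 0"
    and bd: "\<And>s. s \<in> {0..1} \<Longrightarrow> h s \<le> M"
    and s0: "s0 \<in> {0..1}"
  shows "h s0 \<le> 0"
proof (rule ccontr)
  assume "\<not> h s0 \<le> 0"
  hence eps: "h s0 > 0" by simp
  have step: "\<exists>s2 \<in> {0..1}. h s2 \<ge> 2 * h s" if "s \<in> {0..1}" for s
  proof (cases "s \<le> 1/2")
    case True
    have "(2 * s) \<in> {0..1}" using that True by auto
    moreover have "h s \<le> (h 0 + h (2 * s))/2" using mid[of 0 "2 * s"] that True by auto
    ultimately show ?thesis using h0 by (intro bexI[of _ "2 * s"]) auto
  next
    case False
    have "2 * s - 1 \<in> {0..1}" using that False by auto
    moreover have "h s \<le> (h (2 * s-1) + h 1)/2" using mid[of "2 * s-1" 1] that False by auto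
    ultimately show ?thesis using h1 by (intro bexI[of _ "2 * s-1"]) auto
  qed
  have ind: "\<exists>s\<in>{0..1}. h s \<ge> 2^n * h s0" for n :: nat
  proof (induction n)
    case 0 then show ?case using s0 by auto
  next
    case (Suc n)
    then obtain s where s: "s \<in> {0..1}" "h s \<ge> 2^n * h s0" by blast
    obtain s' where "s' \<in> {0..1}" "h s' \<ge> 2 * h s" using step[OF s(1)] by blast
    then show ?case using s by (intro bexI[of _ s']) auto
  qed
  obtain n :: nat where n: "real n > M / h s0" using reals_Archimedean2 by blast
  have "real n < 2^n" by (metis less_exp of_nat_less_iff of_nat_numeral of_nat_power)
  with n have "M / h s0 < 2^n" by linarith
  hence "M < 2^n * h s0" using eps by (simp add: divide_less_eq)
  moreover obtain s where "s \<in> {0..1}" "h s \<ge> 2^n * h s0" using ind by blast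
  ultimately show False using bd by force
qed

lemma midconvex_bounded_convex:
  fixes g :: "real \<Rightarrow> real"
  assumes cJ: "convex J"
    and mid: "\<And>u v. u \<in> J \<Longrightarrow> v \<in> J \<Longrightarrow> g ((u+v)/2) \<le> (g u + g v)/2"
    and neg: "\<And>u. u \<in> J \<Longrightarrow> g u \<le> 0"
  shows "convex_on J g"
proof (rule convex_onI[OF _ cJ])
  fix t x y :: real assume t: "0 < t" "t < 1" and xy: "x \<in> J" "y \<in> J"
  define h where "h s = g ((1-s)*x + s*y) - ((1-s)*g x + s*g y)" for s
  have inJ: "(1-s)*x + s*y \<in> J" if "s \<in> {0..1}" for s
    using convexD[OF cJ xy, of "1-s" s] that by simp
  have "h t \<le> 0"
  proof (rule bd_aux[where h=h and M="\<bar>g x\<bar> + \<bar>g y\<bar>"])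
    fix s u :: real assume su: "s \<in> {0..1}" "u \<in> {0..1}"
    have e: "(1 - (s+u)/2)*x + (s+u)/2*y = (((1-s)*x + s*y) + ((1-u)*x + u*y))/2"
      by (simp add: field_simps)
    show "h ((s+u)/2) \<le> (h s + h u)/2"
    proof -
      have m: "g ((1 - (s+u)/2)*x + (s+u)/2*y) \<le> (g ((1-s)*x + s*y) + g ((1-u)*x + u*y))/2"
        unfolding e by (rule mid[OF inJ[OF su(1)] inJ[OF su(2)]])
      have l: "(1 - (s+u)/2)*g x + (s+u)/2*g y = (((1-s)*g x + s*g y) + ((1-u)*g x + u*g y))/2"
        by (simp add: algebra_simps add_divide_distrib)
      have gen: "\<And>A B C D F::real. A \<le> (C + F)/2 \<Longrightarrow> A - (B + D)/2 \<le> ((C - B) + (F - D))/2" by (simp add: field_simps)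
      show ?thesis unfolding h_def l by (rule gen[OF m])
    qed
  next
    show "h 0 = 0" "h 1 = 0" by (simp_all add: h_def)
  next
    fix s :: real assume s: "s \<in> {0..1}"
    have "g ((1-s)*x + s*y) \<le> 0" using neg[OF inJ[OF s]] .
    moreover have "-((1-s)*g x + s*g y) \<le> \<bar>g x\<bar> + \<bar>g y\<bar>"
    proof -
      have "\<bar>(1-s)*g x\<bar> \<le> \<bar>g x\<bar>" using s by (auto simp: abs_mult intro: mult_left_le_one_le)
      moreover have "\<bar>s*g y\<bar> \<le> \<bar>g y\<bar>" using s by (auto simp: abs_mult intro: mult_left_le_one_le)
      ultimately show ?thesis by linarith
    qed
    ultimately show "h s \<le> \<bar>g x\<bar> + \<bar>g y\<bar>" unfolding h_def by linarith
  next
    show "t \<in> {0..1}" using t by auto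
  qed
  thus "g ((1 - t) *\<^sub>R x + t *\<^sub>R y) \<le> (1 - t) * g x + t * g y" by (simp add: h_def)
qed



lemma lipschitz_real_ordI:
  fixes F :: "real \<Rightarrow> real"
  assumes "0 \<le> L" and "\<And>x y. x \<in> X \<Longrightarrow> y \<in> X \<Longrightarrow> x < y \<Longrightarrow> \<bar>F y - F x\<bar> \<le> L * (y - x)"
  shows "L-lipschitz_on X F"
  unfolding lipschitz_on_def
proof (intro conjI ballI)
  fix x y assume xy: "x \<in> X" "y \<in> X"
  consider "x < y" | "x = y" | "y < x" by linarith
  then show "dist (F x) (F y) \<le> L * dist x y"
  proof cases
    case 1 then show ?thesis using assms(2)[OF xy 1] by (simp add: dist_real_def abs_minus_commute)
  next
    case 2 then show ?thesis using assms(1) by simp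
  next
    case 3 then show ?thesis using assms(2)[OF xy(2,1) 3] by (simp add: dist_real_def abs_minus_commute)
  qed
qed (use assms in auto)

lemma slope_mono:
  fixes g :: "real \<Rightarrow> real"
  assumes g: "convex_on J g" and J: "a \<in> J" "b \<in> J" "a2 \<in> J" "b2 \<in> J"
    and ord: "a < b" "a2 < b2" "a \<le> a2" "b \<le> b2"
  shows "(g a - g b)/(a - b) \<le> (g a2 - g b2)/(a2 - b2)"
proof -
  have 1: "(g a - g b)/(a - b) \<le> (g a - g b2)/(a - b2)"
  proof (cases "b = b2")
    case False
    then show ?thesis using convex_on_slope_le(1)[OF g J(1) J(4), of b] ord by auto
  qed simp
  have 2: "(g a - g b2)/(a - b2) \<le> (g a2 - g b2)/(a2 - b2)"
  proof (cases "a = a2")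
    case False
    then show ?thesis using convex_on_slope_le(2)[OF g J(1) J(4), of a2] ord by auto
  qed simp
  from 1 2 show ?thesis by linarith
qed



lemma convex_lipschitz_Icc:
  fixes g :: "real \<Rightarrow> real"
  assumes g: "convex_on J g" and J: "c1 \<in> J" "d1 \<in> J"
    and ord: "c1 < c" "d < d1"
  shows "\<exists>L. L-lipschitz_on {c..d} g"
proof -
  have cJ: "convex J" using g by (rule convex_on_imp_convex)
  have sub: "{c1..d1} \<subseteq> J"
  proof -
    have "is_interval J" using cJ is_interval_convex_1 by blast
    then show ?thesis using J unfolding is_interval_1 by (meson atLeastAtMost_iff subsetI)
  qed
  define A where "A = (g c1 - g c)/(c1 - c)"
  define B where "B = (g d - g d1)/(d - d1)"
  define L where "L = max \<bar>A\<bar> \<bar>B\<bar>"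
  show ?thesis
  proof (intro exI lipschitz_real_ordI)
    show "0 \<le> L" unfolding L_def by simp
  next
    fix s t assume st: "s \<in> {c..d}" "t \<in> {c..d}" "s < t"
    have inJ: "c \<in> J" "d \<in> J" "s \<in> J" "t \<in> J" using st ord sub by auto
    have lo: "A \<le> (g s - g t)/(s - t)" unfolding A_def
      using st ord by (intro slope_mono[OF g J(1) inJ(1) inJ(3) inJ(4)]) auto
    have hi: "(g s - g t)/(s - t) \<le> B" unfolding B_def
      using st ord by (intro slope_mono[OF g inJ(3) inJ(4) inJ(2) J(2)]) auto
    have eq: "(g s - g t)/(s - t) = (g t - g s)/(t - s)" by (metis minus_diff_eq minus_divide_divide)
    have pos: "t - s > 0" using st by simp
    have "A * (t - s) \<le> g t - g s" using lo pos unfolding eq by (simp add: le_divide_eq)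
    moreover have "g t - g s \<le> B * (t - s)" using hi pos unfolding eq by (simp add: divide_le_eq)
    moreover have "\<bar>A\<bar> * (t-s) \<le> L * (t-s)" "\<bar>B\<bar> * (t-s) \<le> L * (t-s)"
      using pos unfolding L_def by (simp_all add: mult_right_mono)
    moreover have "-(\<bar>A\<bar> * (t-s)) \<le> A * (t - s)"
      using pos mult_right_mono[of "-\<bar>A\<bar>" A "t-s"] by simp
    moreover have "B * (t - s) \<le> \<bar>B\<bar> * (t-s)"
      using pos mult_right_mono[of B "\<bar>B\<bar>" "t-s"] by simp
    ultimately show "\<bar>g t - g s\<bar> \<le> L * (t - s)" by linarith
  qed
qed



lemma compact_in_open_interval:
  fixes K J :: "real set"
  assumes "open J" "is_interval J" "compact K" "K \<subseteq> J" "K \<noteq> {}"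
  obtains c d c1 d1 where "K \<subseteq> {c..d}" "c1 \<in> J" "d1 \<in> J" "c1 < c" "d < d1" "{c1..d1} \<subseteq> J"
proof -
  have iv: "\<And>a b x. a \<in> J \<Longrightarrow> b \<in> J \<Longrightarrow> a \<le> x \<Longrightarrow> x \<le> b \<Longrightarrow> x \<in> J"
    using assms(2) unfolding is_interval_1 by blast
  obtain c where c: "c \<in> K" "\<forall>x\<in>K. c \<le> x" using compact_attains_inf[OF assms(3,5)] by blast
  obtain d where d: "d \<in> K" "\<forall>x\<in>K. x \<le> d" using compact_attains_sup[OF assms(3,5)] by blast
  have cJ: "c \<in> J" "d \<in> J" using c(1) d(1) assms(4) by auto
  obtain r1 where r1: "r1 > 0" "ball c r1 \<subseteq> J" using open_contains_ball[THEN iffD1, OF assms(1)] cJ(1) by blast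
  obtain r2 where r2: "r2 > 0" "ball d r2 \<subseteq> J" using open_contains_ball[THEN iffD1, OF assms(1)] cJ(2) by blast
  have "c - r1/2 \<in> ball c r1" using r1 by (simp add: dist_real_def)
  then have 1: "c - r1/2 \<in> J" using r1(2) by blast
  have "d + r2/2 \<in> ball d r2" using r2 by (simp add: dist_real_def)
  then have 2: "d + r2/2 \<in> J" using r2(2) by blast
  have 3: "{c - r1/2 .. d + r2/2} \<subseteq> J"
  proof
    fix x assume "x \<in> {c - r1/2 .. d + r2/2}"
    then show "x \<in> J" using iv[OF 1 2] by simp
  qed
  have 4: "K \<subseteq> {c..d}" using c d by auto
  have 5: "c - r1/2 < c" "d < d + r2/2" using r1 r2 by auto
  show ?thesis by (rule that[OF 4 1 2 5 3])
qed


lemma convex_lipschitz_compact: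
  fixes g :: "real \<Rightarrow> real"
  assumes "open J" "convex_on J g" "compact K" "K \<subseteq> J"
  shows "\<exists>L. L-lipschitz_on K g"
proof (cases "K = {}")
  case True then show ?thesis by (intro exI[of _ 0]) simp
next
  case False
  have "convex J" using assms(2) by (rule convex_on_imp_convex)
  then have ii: "is_interval J" by (simp add: is_interval_convex_1)
  obtain c d c1 d1 where K: "K \<subseteq> {c..d}" and cd: "c1 \<in> J" "d1 \<in> J" "c1 < c" "d < d1" and "{c1..d1} \<subseteq> J"
    by (rule compact_in_open_interval[OF assms(1) ii assms(3,4) False])
  obtain L where L: "L-lipschitz_on {c..d} g" using convex_lipschitz_Icc[OF assms(2) cd] by blast
  show ?thesis using lipschitz_on_subset[OF L K] by blast
qed


lemma C1_lipschitz_compact: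
  fixes F F' :: "real \<Rightarrow> real"
  assumes "open U" "is_interval U" and der: "\<And>x. x \<in> U \<Longrightarrow> (F has_real_derivative F' x) (at x)"
    and cont: "continuous_on U F'" and "compact K" "K \<subseteq> U"
  shows "\<exists>L. L-lipschitz_on K F"
proof (cases "K = {}")
  case True then show ?thesis by (intro exI[of _ 0]) simp
next
  case False
  obtain c d c1 d1 where K: "K \<subseteq> {c..d}" and sub0: "c1 \<in> U" "d1 \<in> U" and sub: "c1 < c" "d < d1" "{c1..d1} \<subseteq> U"
    by (rule compact_in_open_interval[OF assms(1,2,5,6) False])
  have cd: "{c..d} \<subseteq> U" using sub by auto
  have "compact (F' ` {c..d})"
    by (rule compact_continuous_image[OF continuous_on_subset[OF cont cd]]) simp
  then have "bounded (F' ` {c..d})" by (rule compact_imp_bounded)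
  then obtain B where B0: "\<forall>y\<in>F' ` {c..d}. norm y \<le> B" unfolding bounded_iff by blast
  have B: "\<bar>F' x\<bar> \<le> B" if "x \<in> {c..d}" for x
  proof -
    have "F' x \<in> F' ` {c..d}" using that by (rule imageI)
    show ?thesis using B0 that by simp
  qed
  have "(max B 0)-lipschitz_on {c..d} F"
  proof (rule lipschitz_real_ordI)
    fix x y assume xy: "x \<in> {c..d}" "y \<in> {c..d}" "x < y"
    have dd: "(F has_real_derivative F' z) (at z)" if "x \<le> z" "z \<le> y" for z
    proof -
      have "z \<in> {c..d}" using xy that by simp
      then show ?thesis using cd der by blast
    qed
    obtain z where z: "x < z" "z < y" "F y - F x = (y - x) * F' z"
      using MVT2[OF xy(3) dd] by blast
    have "z \<in> {c..d}" using z xy by simp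
    then have "\<bar>F' z\<bar> \<le> max B 0" using B by force
    then have "\<bar>y - x\<bar> * \<bar>F' z\<bar> \<le> (y - x) * max B 0"
      using z by (simp add: mult_left_mono)
    then show "\<bar>F y - F x\<bar> \<le> max B 0 * (y - x)"
      using z by (simp add: abs_mult mult.commute)
  qed simp
  then show ?thesis using lipschitz_on_subset[OF _ K] by blast
qed



theorem corollary2:
  fixes I :: "real set" and f :: "real \<Rightarrow> real" and p q :: real
  assumes "is_interval I" and "open I" and "I \<subseteq> {0<..}"
    and "q < 0"
    and "\<forall>x\<in>I. f x > 0"
    and "pq_jensen_convex p q I f"
  shows "convex_on (interval_p p I) (f_pq p q f)
         \<and> continuous_on I f
         \<and> locally_lipschitz_on I f"
proof -
  note intI = assms(1) and openI = assms(2) and Ipos = assms(3) and q = assms(4)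
    and fpos = assms(5) and jen = assms(6)
  define \<psi> where "\<psi> = (if p = 0 then ln else (\<lambda>t::real. t powr p))"
  define \<phi> where "\<phi> = (if p = 0 then exp else (\<lambda>u::real. u powr (1/p)))"
  define J where "J = interval_p p I"
  define g where "g = f_pq p q f"
  have J_def': "J = \<psi> ` I" unfolding J_def interval_p_def \<psi>_def by simp
  have xpos: "x > 0" if "x \<in> I" for x using that Ipos by auto
  have phipsi: "\<phi> (\<psi> t) = t" if "t > 0" for t
    using that by (simp add: \<phi>_def \<psi>_def powr_powr)
  have psiphi: "\<psi> (\<phi> u) = u" if "p \<noteq> 0 \<longrightarrow> u > 0" for u
    using that by (auto simp: \<phi>_def \<psi>_def powr_powr)
  have psipos: "p \<noteq> 0 \<longrightarrow> \<psi> t > 0" if "t > 0" for t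
    using that by (simp add: \<psi>_def)
  have Jchar: "J = {u. (p \<noteq> 0 \<longrightarrow> u > 0) \<and> \<phi> u \<in> I}"
  proof
    show "J \<subseteq> {u. (p \<noteq> 0 \<longrightarrow> u > 0) \<and> \<phi> u \<in> I}"
      unfolding J_def' using phipsi psipos xpos by auto
    show "{u. (p \<noteq> 0 \<longrightarrow> u > 0) \<and> \<phi> u \<in> I} \<subseteq> J"
    proof
      fix u assume u: "u \<in> {u. (p \<noteq> 0 \<longrightarrow> u > 0) \<and> \<phi> u \<in> I}"
      then have "u = \<psi> (\<phi> u)" using psiphi by auto
      then show "u \<in> J" unfolding J_def' using u by blast
    qed
  qed
  have phiI: "\<phi> u \<in> I" if "u \<in> J" for u using that Jchar by auto
  have psiphiJ: "\<psi> (\<phi> u) = u" if "u \<in> J" for u using that Jchar psiphi by auto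
  have contpsi: "continuous_on {0<..} \<psi>"
    unfolding \<psi>_def by (auto intro!: continuous_intros)
  have openJ: "open J"
  proof (cases "p = 0")
    case True
    then have "J = exp -` I" using Jchar by (auto simp: \<phi>_def)
    then show ?thesis using openI by (auto intro!: continuous_open_vimage continuous_intros)
  next
    case False
    then have "J = (\<lambda>u. u powr (1/p)) -` I \<inter> {0<..}" using Jchar by (auto simp: \<phi>_def)
    moreover have "continuous_on {0<..} (\<lambda>u::real. u powr (1/p))" by (auto intro!: continuous_intros)
    ultimately show ?thesis using openI continuous_on_open_vimage[of "{0<..}" "\<lambda>u::real. u powr (1/p)"] by simp
  qed
  have convJ: "convex J"
  proof -
    have "connected I" using intI is_interval_connected_1 by blast
    then have "connected J" unfolding J_def'
      using connected_continuous_image continuous_on_subset[OF contpsi Ipos] by blast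
    then show ?thesis using is_interval_connected_1 is_interval_convex_1 by blast
  qed
  have gform: "g u = - ((f (\<phi> u)) powr q)" for u
    using q by (simp add: g_def f_pq_def \<phi>_def)
  have gneg: "g u \<le> 0" if "u \<in> J" for u
    using fpos phiI[OF that] by (simp add: gform)
  have Hp: "power_mean p (\<phi> u) (\<phi> v) = \<phi> ((u+v)/2)" if "u \<in> J" "v \<in> J" for u v
  proof (cases "p = 0")
    case True
    have "sqrt (exp u * exp v) = exp ((u+v)/2)"
    proof (rule real_sqrt_unique)
      show "exp ((u+v)/2)^2 = exp u * exp v"
        by (simp add: power2_eq_square exp_add[symmetric])
    qed simp
    then show ?thesis using True by (simp add: power_mean_def \<phi>_def)
  next
    case False
    have "u > 0" "v > 0" using that Jchar False by auto
    then have "(u powr (1/p)) powr p = u" "(v powr (1/p)) powr p = v"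
      using False by (simp_all add: powr_powr)
    then show ?thesis using False by (simp add: power_mean_def \<phi>_def)
  qed
  have mid: "g ((u+v)/2) \<le> (g u + g v)/2" if uv: "u \<in> J" "v \<in> J" for u v
  proof -
    define a where "a = f (\<phi> u)"
    define b where "b = f (\<phi> v)"
    have m: "(u+v)/2 \<in> J" using convexD[OF convJ uv, of "1/2" "1/2"] by (simp add: field_simps)
    define c where "c = f (\<phi> ((u+v)/2))"
    have pos: "a > 0" "b > 0" "c > 0" using fpos phiI uv m by (auto simp: a_def b_def c_def)
    define S where "S = (a powr q + b powr q)/2"
    have Spos: "S > 0" using pos by (simp add: S_def add_pos_pos)
    have "c \<le> power_mean q a b"
      using jen phiI[OF uv(1)] phiI[OF uv(2)] Hp[OF uv]
      unfolding pq_jensen_convex_def a_def b_def c_def by metis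
    also have "power_mean q a b = S powr (1/q)" using q by (simp add: power_mean_def S_def)
    finally have "c \<le> S powr (1/q)" .
    then have "(S powr (1/q)) powr q \<le> c powr q"
      using powr_mono2'[of q c "S powr (1/q)"] q pos by simp
    also have "(S powr (1/q)) powr q = S" using Spos q by (simp add: powr_powr)
    finally have "S \<le> c powr q" .
    then show ?thesis by (simp add: gform a_def[symmetric] b_def[symmetric] c_def[symmetric] S_def)
  qed
  have gconv: "convex_on J g"
    by (rule midconvex_bounded_convex[OF convJ mid gneg])
  have contg: "continuous_on J g" by (rule convex_on_continuous[OF openJ gconv])
  have psiJ: "\<psi> x \<in> J" if "x \<in> I" for x using that J_def' by blast
  have glt: "g u < 0" if "u \<in> J" for u
    using fpos phiI[OF that] by (simp add: gform) (metis less_irrefl)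
  have frep: "f x = (- g (\<psi> x)) powr (1/q)" if "x \<in> I" for x
  proof -
    have "g (\<psi> x) = - (f x powr q)" using gform phipsi[OF xpos[OF that]] by simp
    then show ?thesis using fpos that q by (simp add: powr_powr less_imp_le)
  qed
  have contpsiI: "continuous_on I \<psi>" using continuous_on_subset[OF contpsi Ipos] .
  have contgpsi: "continuous_on I (\<lambda>x. g (\<psi> x))"
    using continuous_on_compose2[OF contg contpsiI] psiJ by blast
  have contf: "continuous_on I f"
  proof -
    have "continuous_on I (\<lambda>x. (- g (\<psi> x)) powr (1/q))"
      using glt psiJ by (intro continuous_on_powr continuous_on_minus contgpsi continuous_on_const) force
    then show ?thesis using frep continuous_on_cong by (metis (no_types, lifting))
  qed
  define \<psi>' where "\<psi>' = (if p = 0 then (\<lambda>t::real. inverse t) else (\<lambda>t. p * t powr (p - 1)))"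
  have derpsi: "(\<psi> has_real_derivative \<psi>' t) (at t)" if "t \<in> {0<..}" for t
    using that by (auto simp: \<psi>_def \<psi>'_def intro: DERIV_ln has_real_derivative_powr)
  have contpsi': "continuous_on {0<..} \<psi>'"
    unfolding \<psi>'_def by (auto intro!: continuous_intros)
  define h where "h = (\<lambda>w::real. (- w) powr (1/q))"
  define h' where "h' = (\<lambda>w::real. - ((1/q) * (- w) powr (1/q - 1)))"
  have derh: "(h has_real_derivative h' w) (at w)" if "w \<in> {..<0}" for w
  proof -
    have "((\<lambda>w. (- w) powr (1/q)) has_real_derivative (1/q) * (- w) powr (1/q - 1) * (-1)) (at w)"
      using that by (intro DERIV_chain2[OF has_real_derivative_powr] derivative_eq_intros) auto
    then show ?thesis by (simp add: h_def h'_def)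
  qed
  have conth': "continuous_on {..<0} h'"
    unfolding h'_def using q by (auto intro!: continuous_intros)
  have lip: "locally_lipschitz_on I f"
    unfolding locally_lipschitz_on_def
  proof
    fix x0 assume x0: "x0 \<in> I"
    obtain e where e: "e > 0" "cball x0 e \<subseteq> I"
      using open_contains_cball[THEN iffD1, OF openI] x0 by blast
    define C where "C = cball x0 e"
    have Cc: "compact C" by (simp add: C_def)
    have CI: "C \<subseteq> I" using e by (simp add: C_def)
    obtain L1 where L1: "L1-lipschitz_on C \<psi>"
      using C1_lipschitz_compact[OF _ _ derpsi contpsi' Cc] CI Ipos
      by (auto simp: is_interval_1)
    have Kc: "compact (\<psi> ` C)"
      by (rule compact_continuous_image[OF continuous_on_subset[OF contpsiI CI] Cc])
    have KJ: "\<psi> ` C \<subseteq> J" using CI psiJ by blast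
    obtain L2 where L2: "L2-lipschitz_on (\<psi> ` C) g"
      using convex_lipschitz_compact[OF openJ gconv Kc KJ] by blast
    have K2c: "compact (g ` \<psi> ` C)"
      by (rule compact_continuous_image[OF continuous_on_subset[OF contg KJ] Kc])
    have K2: "g ` \<psi> ` C \<subseteq> {..<0}" using KJ glt by auto
    obtain L3 where L3: "L3-lipschitz_on (g ` \<psi> ` C) h"
      using C1_lipschitz_compact[OF _ _ derh conth' K2c K2] by (auto simp: is_interval_1)
    have "(L2 * L1)-lipschitz_on C (\<lambda>x. g (\<psi> x))"
      by (rule lipschitz_on_compose2[OF L1 L2])
    moreover have "(\<lambda>x. g (\<psi> x)) ` C = g ` \<psi> ` C" by auto
    ultimately have "(L3 * (L2 * L1))-lipschitz_on C (\<lambda>x. h (g (\<psi> x)))"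
      using lipschitz_on_compose2[of "L2 * L1" C "\<lambda>x. g (\<psi> x)" L3 h] L3 by simp
    then have "(L3 * (L2 * L1))-lipschitz_on C f"
      by (rule lipschitz_on_transform) (use CI frep in \<open>auto simp: h_def\<close>)
    then have "(L3 * (L2 * L1))-lipschitz_on (cball x0 e \<inter> I) f"
      by (rule lipschitz_on_subset) (auto simp: C_def)
    then show "\<exists>e>0. \<exists>L. L-lipschitz_on (cball x0 e \<inter> I) f" using e(1) by blast
  qed
  show ?thesis using gconv contf lip unfolding J_def g_def by blast
qed


end
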